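(* Fix a positive integer $r$. There are only finitely many tuples of positive integers $(d,e_1,\dots,e_r)$ satisfying all of the following: - $d > e_1 \ge e_2\ge\cdots\ge e_r$; - $e_k \mid d$ for every $k$; - $\sum_{k=1}^r (e_k+1) = d+1$. Equivalently, for each $r$ there are only finitely many "neat" canonical forms $p = \sum_{k=1}^r f_k^{d/e_k}$ (with $f_k\in H_{e_k}(\mathbb{C}^2)$) of the type in the following statement: for $m=0$, a general binary $d$-ic form is a sum $\sum_{k=1}^r f_k^{d/e_k}$ with $\deg f_k=e_k$ whenever the three conditions above hold.
   Context: $H_d(\mathbb{C}^n)$ denotes the complex vector space of homogeneous polynomials of degree $d$ in $n$ variables. *)

theory Defs
  imports Main
begin

end

theory Submission
  imports Defs Complex_Main
begin

lemma sum_list_le_len: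
  assumes "\<forall>x\<in>set xs. f x \<le> (b::real)"
  shows "sum_list (map f xs) \<le> real (length xs) * b"
  using assms by (induction xs) (auto simp: algebra_simps)

definition P :: "nat \<Rightarrow> real \<Rightarrow> real \<Rightarrow> bool" where
  "P r \<beta> c \<longleftrightarrow> (\<forall>ns. length ns = r \<and> (\<forall>n\<in>set ns. n > 0) \<and>
      sum_list (map (\<lambda>n. 1 / real n) ns) < \<beta> \<longrightarrow> \<beta> - sum_list (map (\<lambda>n. 1 / real n) ns) \<ge> c)"

lemma gap: "\<forall>\<beta>>0. \<exists>c>0. P r \<beta> c"
proof (induction r)
  case 0
  then show ?case by (auto simp: P_def)
next
  case (Suc r)
  define C where "C \<beta> = (SOME c. c > 0 \<and> P r \<beta> c)" for \<beta>
  have C: "C \<beta> > 0 \<and> P r \<beta> (C \<beta>)" if "\<beta> > 0" for \<beta>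
    unfolding C_def using Suc that by (metis (no_types, lifting) someI_ex)
  show ?case
  proof (intro allI impI)
    fix \<beta> :: real assume b: "\<beta> > 0"
    define N where "N = nat \<lceil>2 * real (Suc r) / \<beta>\<rceil>"
    define V where "V = {v::nat. v \<le> N \<and> v > 0 \<and> 1 / real v < \<beta>}"
    define c where "c = Min (insert (\<beta>/2) ((\<lambda>v. C (\<beta> - 1 / real v)) ` V))"
    have fV: "finite V" unfolding V_def by auto
    have cpos: "c > 0" unfolding c_def using fV b C unfolding V_def by auto
    have cle: "c \<le> \<beta>/2" unfolding c_def using fV by (intro Min_le) auto
    have cleV: "c \<le> C (\<beta> - 1 / real v)" if "v \<in> V" for v
      unfolding c_def using fV that by auto
    have "P (Suc r) \<beta> c"
      unfolding P_def
    proof (intro allI impI)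
      fix ns :: "nat list"
      assume a: "length ns = Suc r \<and> (\<forall>n\<in>set ns. n > 0) \<and>
        sum_list (map (\<lambda>n. 1 / real n) ns) < \<beta>"
      let ?f = "\<lambda>n. 1 / real n"
      let ?s = "sum_list (map ?f ns)"
      show "\<beta> - ?s \<ge> c"
      proof (cases "?s \<le> \<beta>/2")
        case True then show ?thesis using cle by linarith
      next
        case False
        have ne: "ns \<noteq> []" using a by auto
        define v where "v = Min (set ns)"
        have vin: "v \<in> set ns" unfolding v_def using ne by auto
        have vpos: "v > 0" using a vin by auto
        have "\<forall>x\<in>set ns. ?f x \<le> ?f v"
        proof
          fix x assume "x \<in> set ns"
          hence "v \<le> x" unfolding v_def by auto
          thus "?f x \<le> ?f v" using vpos by (simp add: frac_le)
        qed
        hence "?s \<le> real (Suc r) * ?f v" using sum_list_le_len[of ns ?f "?f v"] a by simp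
        moreover have "real (Suc r) * ?f v = real (Suc r) / real v" by simp
        ultimately have "\<beta>/2 < real (Suc r) / real v" using False by linarith
        hence "\<beta> * real v < 2 * real (Suc r)" using vpos b by (simp add: field_simps)
        hence "real v < 2 * real (Suc r) / \<beta>" using b by (simp add: field_simps)
        hence vN: "v \<le> N" unfolding N_def by linarith
        have split: "?s = ?f v + sum_list (map ?f (remove1 v ns))"
          using sum_list_map_remove1[OF vin, of ?f] by simp
        have nn: "sum_list (map ?f (remove1 v ns)) \<ge> 0"
          by (rule sum_list_nonneg) auto
        have vV: "v \<in> V" unfolding V_def using vN vpos split nn a by auto
        have bp: "\<beta> - ?f v > 0" using vV unfolding V_def by auto
        have "P r (\<beta> - ?f v) (C (\<beta> - ?f v))" using C[OF bp] by auto
        moreover have "length (remove1 v ns) = r" using a vin by (simp add: length_remove1)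
        moreover have "\<forall>n\<in>set (remove1 v ns). n > 0" using a
          by (meson notin_set_remove1)
        moreover have "sum_list (map ?f (remove1 v ns)) < \<beta> - ?f v" using split a by linarith
        ultimately have "(\<beta> - ?f v) - sum_list (map ?f (remove1 v ns)) \<ge> C (\<beta> - ?f v)"
          unfolding P_def by blast
        then show ?thesis using split cleV[OF vV] by linarith
      qed
    qed
    then show "\<exists>c>0. P (Suc r) \<beta> c" using cpos by blast
  qed
qed

theorem theorem4p4:
  fixes r :: nat
  assumes "r \<ge> 1"
  shows "finite {(d :: nat, es :: nat list).
            length es = r \<and> d > 0 \<and> (\<forall>k<r. es ! k > 0) \<and>
            d > es ! 0 \<and> (\<forall>k. Suc k < r \<longrightarrow> es ! k \<ge> es ! Suc k) \<and>
            (\<forall>k<r. es ! k dvd d) \<and>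
            (\<Sum>k<r. es ! k + 1) = d + 1}"
proof -
  obtain c where c: "c > 0" "P r 1 c" using gap[of r] by (meson zero_less_one)
  define D where "D = nat \<lceil>real r / c\<rceil>"
  let ?S = "{(d :: nat, es :: nat list).
            length es = r \<and> d > 0 \<and> (\<forall>k<r. es ! k > 0) \<and>
            d > es ! 0 \<and> (\<forall>k. Suc k < r \<longrightarrow> es ! k \<ge> es ! Suc k) \<and>
            (\<forall>k<r. es ! k dvd d) \<and>
            (\<Sum>k<r. es ! k + 1) = d + 1}"
  have sub: "?S \<subseteq> {..D} \<times> {es. set es \<subseteq> {..D} \<and> length es = r}"
  proof
    fix x assume "x \<in> ?S"
    then obtain d es where x: "x = (d, es)" and h: "length es = r" "d > 0" "\<forall>k<r. es ! k > 0"
      "d > es ! 0" "\<forall>k<r. es ! k dvd d" "(\<Sum>k<r. es ! k + 1) = d + 1" by auto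
    have sumeq: "(\<Sum>k<r. es ! k) + r = d + 1" using h(6) unfolding sum.distrib by simp
    have r2: "r \<ge> 2"
    proof (rule ccontr)
      assume "\<not> r \<ge> 2" hence "r = 1" using assms by auto
      thus False using sumeq h(4) by simp
    qed
    define ns where "ns = map (\<lambda>e. d div e) es"
    have termq: "1 / real (d div e) = real e / real d" if "e dvd d" "e > 0" for e
      using that h(2) by (auto simp: real_of_nat_div field_simps elim!: dvdE)
    have "sum_list (map (\<lambda>n. 1 / real n) ns) = (\<Sum>k<r. 1 / real (d div es ! k))"
      unfolding ns_def by (simp add: sum_list_sum_nth h(1) o_def atLeast0LessThan)
    also have "\<dots> = (\<Sum>k<r. real (es ! k) / real d)"
      by (rule sum.cong) (use termq h in auto)
    also have "\<dots> = real (\<Sum>k<r. es ! k) / real d" by (simp add: sum_divide_distrib)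
    also have "\<dots> = (real d + 1 - real r) / real d" using sumeq
      by (metis add_diff_cancel_right' of_nat_add of_nat_1)
    finally have s: "sum_list (map (\<lambda>n. 1 / real n) ns) = 1 - (real r - 1) / real d"
      using h(2) by (simp add: field_simps)
    have lt: "sum_list (map (\<lambda>n. 1 / real n) ns) < 1" using s r2 h(2) by simp
    have npos: "\<forall>n\<in>set ns. n > 0"
    proof
      fix n assume "n \<in> set ns"
      then obtain k where k: "k < r" "n = d div es ! k" unfolding ns_def using h(1)
        by (auto simp: in_set_conv_nth)
      have "es ! k \<le> d" using h(5) k(1) h(2) by (simp add: dvd_imp_le)
      thus "n > 0" using k h(3) by (simp add: div_greater_zero_iff)
    qed
    have "1 - sum_list (map (\<lambda>n. 1 / real n) ns) \<ge> c"
    proof -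
      have "length ns = r" unfolding ns_def using h(1) by simp
      thus ?thesis using c(2) lt npos unfolding P_def by blast
    qed
    hence "(real r - 1) / real d \<ge> c" using s by simp
    hence "real r - 1 \<ge> c * real d" using h(2) by (simp add: field_simps)
    hence "c * real d \<le> real r" by linarith
    hence "real d \<le> real r / c" using c(1) by (simp add: field_simps)
    hence dD: "d \<le> D" unfolding D_def by linarith
    have "set es \<subseteq> {..D}"
    proof
      fix e assume "e \<in> set es"
      then obtain k where "k < r" "e = es ! k" using h(1) by (auto simp: in_set_conv_nth)
      hence "e \<le> d" using h(5) h(2) by (simp add: dvd_imp_le)
      thus "e \<in> {..D}" using dD by simp
    qed
    thus "x \<in> {..D} \<times> {es. set es \<subseteq> {..D} \<and> length es = r}" using x dD h(1) by auto
  qed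
  show ?thesis
    by (rule finite_subset[OF sub]) (auto intro: finite_lists_length_eq)
qed

end
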